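(* Let $\gamma\in(0,1)$, $\mu\in(0,\infty)\setminus\{1\}$, and $k=\lfloor 1/\mu\rfloor$. Let $g$ be a concave traveling wave with compact nonempty support and speed $v$, normalized so that its support is $[L,0]$. Let $s=\sup\{\xi:\sup_x\Phi_\xi[g](x)\ge\gamma\}$, and suppose $v\le s$. Then: - $\mu<1$ (so $k\ge1$); - $v=\frac{2\gamma}{k(2-(k+1)\mu)}$; - $s=\frac{1-\gamma-(1-\mu)v}{\mu}$; - $g(x)=-\int_x^0 g'(y)\,dy$ on $[L,0]$ and $g=-\infty$ off $[L,0]$, where for every integer $j\ge1$ one has $g'(x)=j\mu-1$ for $x\in[L,0]$ with $-jv<x<-(j-1)v$.
   Context: Let $\pi(x)=x$ if $x\ge0$ and $\pi(x)=-\infty$ otherwise. Write $x_+=\max(x,0)$ and use $\sup\emptyset=-\infty$. Define $\Phi_\xi[h](x)=1-\gamma-\mu(\xi-x)_++\sup_y(h(y)-|x-y|)$. The dynamics is defined for $n\ge1$ by: - $p_n(x)=\pi[1-\gamma+\sup_y(g_{n-1}(y)-\min(1,\mu)(x-y)_+)]$; - $s_n=\sup\{x:p_n(x)\ge\gamma\}$; - $g_n=\pi\circ\Phi_{s_n}[g_{n-1}]$. A traveling wave with speed $v$ is a $g$ with $g_0=g\Rightarrow g_n(x)=g(x-nv)$ for all $n,x$. The support is $\{g\ge0\}$. *)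

theory Defs
  imports "HOL-Analysis.Analysis"
begin

text \<open>Values live in the extended reals; only the values in \<open>\<real> \<union> {-\<infinity>}\<close> matter.\<close>

definition pi_cut :: "ereal \<Rightarrow> ereal" where
  "pi_cut x = (if x \<ge> 0 then x else -\<infinity>)"

definition Phi :: "real \<Rightarrow> real \<Rightarrow> ereal \<Rightarrow> (real \<Rightarrow> ereal) \<Rightarrow> real \<Rightarrow> ereal" where
  "Phi \<gamma> \<mu> \<xi> h x =
     ereal (1 - \<gamma>) - ereal \<mu> * max (\<xi> - ereal x) 0 + (SUP y. h y - ereal \<bar>x - y\<bar>)"

definition p_step :: "real \<Rightarrow> real \<Rightarrow> (real \<Rightarrow> ereal) \<Rightarrow> real \<Rightarrow> ereal" where
  "p_step \<gamma> \<mu> h x =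
     pi_cut (ereal (1 - \<gamma>) + (SUP y. h y - ereal (min 1 \<mu> * max (x - y) 0)))"

definition s_step :: "real \<Rightarrow> real \<Rightarrow> (real \<Rightarrow> ereal) \<Rightarrow> ereal" where
  "s_step \<gamma> \<mu> h = Sup {ereal x | x. p_step \<gamma> \<mu> h x \<ge> ereal \<gamma>}"

definition g_step :: "real \<Rightarrow> real \<Rightarrow> (real \<Rightarrow> ereal) \<Rightarrow> real \<Rightarrow> ereal" where
  "g_step \<gamma> \<mu> h = (\<lambda>x. pi_cut (Phi \<gamma> \<mu> (s_step \<gamma> \<mu> h) h x))"

definition g_seq :: "real \<Rightarrow> real \<Rightarrow> (real \<Rightarrow> ereal) \<Rightarrow> nat \<Rightarrow> real \<Rightarrow> ereal" where
  "g_seq \<gamma> \<mu> g0 n = (g_step \<gamma> \<mu> ^^ n) g0"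

definition traveling_wave :: "real \<Rightarrow> real \<Rightarrow> (real \<Rightarrow> ereal) \<Rightarrow> real \<Rightarrow> bool" where
  "traveling_wave \<gamma> \<mu> g v \<longleftrightarrow> (\<forall>n x. g_seq \<gamma> \<mu> g n x = g (x - real n * v))"

definition concave_e :: "(real \<Rightarrow> ereal) \<Rightarrow> bool" where
  "concave_e g \<longleftrightarrow> convex {(x, r::real). ereal r \<le> g x}"

end

theory Submission
  imports Defs
begin

lemma pi_cut_ereal: "pi_cut (ereal r) = (if 0 \<le> r then ereal r else -\<infinity>)"
  by (simp add: pi_cut_def)

lemma sup_supp:
  fixes g :: "real \<Rightarrow> ereal" and G f :: "real \<Rightarrow> real"
  assumes out: "\<And>y. y \<notin> S \<Longrightarrow> g y = -\<infinity>" and inn: "\<And>y. y \<in> S \<Longrightarrow> g y = ereal (G y)"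
    and ne: "S \<noteq> {}" and bdd: "\<And>y. y\<in>S \<Longrightarrow> G y - f y \<le> B"
  shows "(SUP y. g y - ereal (f y)) = ereal (Sup ((\<lambda>y. G y - f y) ` S))"
proof (rule antisym)
  have bd: "bdd_above ((\<lambda>y. G y - f y) ` S)" by (rule bdd_aboveI2) (rule bdd)
  show "(SUP y. g y - ereal (f y)) \<le> ereal (Sup ((\<lambda>y. G y - f y) ` S))"
  proof (rule SUP_least)
    fix y show "g y - ereal (f y) \<le> ereal (Sup ((\<lambda>y. G y - f y) ` S))"
    proof (cases "y \<in> S")
      case True
      then have "G y - f y \<le> Sup ((\<lambda>y. G y - f y) ` S)" using bd by (intro cSup_upper) auto
      then show ?thesis using True inn by simp
    next
      case False then show ?thesis using out by simp
    qed
  qed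
next
  obtain y0 where y0: "y0 \<in> S" using ne by auto
  define X where "X = (SUP y. g y - ereal (f y))"
  have up: "g y - ereal (f y) \<le> X" for y unfolding X_def by (rule SUP_upper) auto
  have "X \<ge> ereal (G y0 - f y0)" using up[of y0] inn[OF y0] by simp
  then have "X \<noteq> -\<infinity>" by auto
  show "ereal (Sup ((\<lambda>y. G y - f y) ` S)) \<le> X"
  proof (cases "X = \<infinity>")
    case True then show ?thesis by simp
  next
    case False
    with \<open>X \<noteq> -\<infinity>\<close> obtain x where x: "X = ereal x" by (cases X) auto
    have "Sup ((\<lambda>y. G y - f y) ` S) \<le> x"
    proof (rule cSup_least)
      show "(\<lambda>y. G y - f y) ` S \<noteq> {}" using ne by simp
      fix r assume "r \<in> (\<lambda>y. G y - f y) ` S"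
      then obtain y where "y \<in> S" "r = G y - f y" by auto
      then show "r \<le> x" using up[of y] inn[of y] x by simp
    qed
    then show ?thesis using x by simp
  qed
qed


locale W =
  fixes \<gamma> \<mu> v L :: real and g :: "real \<Rightarrow> ereal"
  assumes gamma: "0 < \<gamma>" "\<gamma> < 1" and mu: "0 < \<mu>" "\<mu> \<noteq> 1"
    and fin: "\<forall>x. g x \<noteq> \<infinity>" and conc: "concave_e g" and tw: "traveling_wave \<gamma> \<mu> g v"
    and supp: "{x. g x \<ge> 0} = {L..0}" and L: "L \<le> 0"
    and vle: "ereal v \<le> Sup {ereal \<xi> | \<xi>. (SUP x. Phi \<gamma> \<mu> (ereal \<xi>) g x) \<ge> ereal \<gamma>}"
begin

definition G where "G y = real_of_ereal (g y)"
definition m where "m = min 1 \<mu>"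

lemma wave1: "g_step \<gamma> \<mu> g x = g (x - v)"
proof -
  have "g_seq \<gamma> \<mu> g (Suc 0) x = g (x - real (Suc 0) * v)" using tw unfolding traveling_wave_def by blast
  then show ?thesis by (simp add: g_seq_def)
qed

lemma out: assumes "y \<notin> {L..0}" shows "g y = -\<infinity>"
proof -
  have "\<not> g y \<ge> 0" using assms supp by blast
  moreover have "g y = g_step \<gamma> \<mu> g (y + v)" using wave1[of "y+v"] by simp
  ultimately show ?thesis unfolding g_step_def pi_cut_def by (auto split: if_splits)
qed

lemma inn: assumes "y \<in> {L..0}" shows "g y = ereal (G y)" "G y \<ge> 0"
proof -
  have "g y \<ge> 0" using assms supp by blast
  then have "g y \<noteq> -\<infinity>" "g y \<noteq> \<infinity>" using fin by auto
  then show "g y = ereal (G y)" unfolding G_def by (cases "g y") auto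
  with \<open>g y \<ge> 0\<close> show "G y \<ge> 0" by simp
qed

lemma concave: assumes "a \<in> {L..0}" "b \<in> {L..0}" "0 \<le> t" "t \<le> 1"
  shows "t * G a + (1 - t) * G b \<le> G (t * a + (1 - t) * b)"
proof -
  have C: "convex {(x, r::real). ereal r \<le> g x}" using conc unfolding concave_e_def .
  have "(a, G a) \<in> {(x, r::real). ereal r \<le> g x}" "(b, G b) \<in> {(x, r::real). ereal r \<le> g x}"
    using inn assms by auto
  from convexD[OF C this, of t "1 - t"] assms
  have "ereal (t * G a + (1 - t) * G b) \<le> g (t * a + (1 - t) * b)" by simp
  moreover have "t * a + (1 - t) * b \<in> {L..0}"
  proof -
    have "t * a + (1 - t) * b \<ge> t * L + (1 - t) * L" using assms by (intro add_mono mult_left_mono) auto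
    moreover have "t * a \<le> 0" "(1 - t) * b \<le> 0" using assms by (auto intro: mult_nonneg_nonpos)
    moreover have "t * L + (1 - t) * L = L" by (simp add: algebra_simps)
    ultimately show ?thesis by simp
  qed
  ultimately show ?thesis using inn by simp
qed


lemma L_in: "L \<in> {L..0}" "0 \<in> {L..0}" using L by auto

definition B0 where "B0 = 2 * G (L/2)"

lemma bounded: assumes y: "y \<in> {L..0}" shows "G y \<le> B0"
proof (cases "y \<le> L/2")
  case True
  show ?thesis
  proof (cases "y = 0")
    case True
    then have "L = 0" using \<open>y \<le> L/2\<close> y by auto
    then show ?thesis using True inn(2)[OF y] unfolding B0_def by simp
  next
    case False
    then have yn: "y < 0" using y by auto
    define t where "t = (L/2) / y"
    have t1: "t \<le> 1" using yn y True unfolding t_def by (simp add: field_simps)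
    have t2: "t \<ge> 1/2" using yn y True unfolding t_def by (simp add: field_simps)
    have pt: "t * y + (1 - t) * 0 = L/2" using yn unfolding t_def by simp
    have "t * G y + (1 - t) * G 0 \<le> G (t * y + (1 - t) * 0)"
      by (rule concave[OF y L_in(2)]) (use t1 t2 in auto)
    then have "t * G y + (1 - t) * G 0 \<le> G (L/2)" unfolding pt .
    moreover have "(1 - t) * G 0 \<ge> 0" using t1 inn(2)[OF L_in(2)] by simp
    moreover have "G y \<le> 2 * (t * G y)"
    proof -
      have "1 * G y \<le> (2 * t) * G y" by (rule mult_right_mono) (use t2 inn(2)[OF y] in auto)
      then show ?thesis by simp
    qed
    ultimately show ?thesis unfolding B0_def by linarith
  qed
next
  case False
  then have Ln: "L < 0" "y - L > 0" using y by auto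
  define t where "t = (- L/2) / (y - L)"
  have t1: "t \<le> 1" using Ln y False unfolding t_def by (simp add: field_simps)
  have t2: "t \<ge> 1/2" using Ln y False unfolding t_def by (simp add: field_simps)
  have nz: "y - L \<noteq> 0" using Ln by simp
  have "t * (y - L) = - L/2" unfolding t_def using nz by (simp add: field_simps)
  moreover have "t * y + (1 - t) * L = t * (y - L) + L" by (simp add: algebra_simps)
  ultimately have pt: "t * y + (1 - t) * L = L/2" by simp
  have "t * G y + (1 - t) * G L \<le> G (t * y + (1 - t) * L)"
    by (rule concave[OF y L_in(1)]) (use t1 t2 in auto)
  then have "t * G y + (1 - t) * G L \<le> G (L/2)" unfolding pt .
  moreover have "(1 - t) * G L \<ge> 0" using t1 inn(2)[OF L_in(1)] by simp
    moreover have "G y \<le> 2 * (t * G y)"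
    proof -
      have "1 * G y \<le> (2 * t) * G y" by (rule mult_right_mono) (use t2 inn(2)[OF y] in auto)
      then show ?thesis by simp
    qed
  ultimately show ?thesis unfolding B0_def by linarith
qed

lemma bnd: "y \<in> {L..0} \<Longrightarrow> 0 \<le> r \<Longrightarrow> G y - r \<le> B0"
  using bounded by force

lemma m_props: "0 < m" "m \<le> 1" "m \<le> \<mu>" using mu unfolding m_def by auto

definition Hr where "Hr x = Sup ((\<lambda>y. G y - \<bar>x - y\<bar>) ` {L..0})"
definition Pr where "Pr x = Sup ((\<lambda>y. G y - m * max (x - y) 0) ` {L..0})"

lemma H_ge: "y \<in> {L..0} \<Longrightarrow> G y - \<bar>x - y\<bar> \<le> Hr x"
  unfolding Hr_def
  by (rule cSup_upper) (auto intro!: bdd_aboveI2[where M=B0] bnd)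

lemma H_le: "(\<And>y. y \<in> {L..0} \<Longrightarrow> G y - \<bar>x - y\<bar> \<le> b) \<Longrightarrow> Hr x \<le> b"
  unfolding Hr_def using L_in by (intro cSup_least) auto

lemma P_ge: "y \<in> {L..0} \<Longrightarrow> G y - m * max (x - y) 0 \<le> Pr x"
  unfolding Pr_def using m_props
  by (intro cSup_upper bdd_aboveI2[where M=B0]) (auto intro!: bnd)

lemma P_le: "(\<And>y. y \<in> {L..0} \<Longrightarrow> G y - m * max (x - y) 0 \<le> b) \<Longrightarrow> Pr x \<le> b"
  unfolding Pr_def using L_in by (intro cSup_least) auto

lemma H_lip: "Hr x \<le> Hr x' + \<bar>x - x'\<bar>"
proof (rule H_le)
  fix y assume y: "y \<in> {L..0}"
  have "G y - \<bar>x' - y\<bar> \<le> Hr x'" by (rule H_ge[OF y])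
  then show "G y - \<bar>x - y\<bar> \<le> Hr x' + \<bar>x - x'\<bar>" by linarith
qed

lemma H_le_B: "Hr x \<le> B0"
  by (rule H_le) (smt (verit) bounded)

lemma P_lip: "Pr x \<le> Pr x' + m * \<bar>x - x'\<bar>"
proof (rule P_le)
  fix y assume y: "y \<in> {L..0}"
  have "G y - m * max (x' - y) 0 \<le> Pr x'" by (rule P_ge[OF y])
  moreover have "m * max (x' - y) 0 \<le> m * max (x - y) 0 + m * \<bar>x - x'\<bar>"
    using m_props by (simp add: distrib_left[symmetric] mult_left_mono)
  ultimately show "G y - m * max (x - y) 0 \<le> Pr x' + m * \<bar>x - x'\<bar>" by linarith
qed

lemma SUP_H: "(SUP y. g y - ereal \<bar>x - y\<bar>) = ereal (Hr x)"
  unfolding Hr_def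
  using L by (intro sup_supp[where B=B0]) (auto intro: out inn bnd)

lemma SUP_P: "(SUP y. g y - ereal (m * max (x - y) 0)) = ereal (Pr x)"
  unfolding Pr_def using m_props L
  by (intro sup_supp[where B=B0]) (auto intro: out inn bnd)

lemma p_eq: "p_step \<gamma> \<mu> g x = pi_cut (ereal (1 - \<gamma> + Pr x))"
  unfolding p_step_def using SUP_P[of x] unfolding m_def by simp

lemma p_ge: "p_step \<gamma> \<mu> g x \<ge> ereal \<gamma> \<longleftrightarrow> 1 - \<gamma> + Pr x \<ge> \<gamma>"
  unfolding p_eq pi_cut_ereal using gamma by auto

lemma Phi_eq: "Phi \<gamma> \<mu> (ereal \<xi>) g x = ereal (1 - \<gamma> - \<mu> * max (\<xi> - x) 0 + Hr x)"
  unfolding Phi_def SUP_H by (simp add: max_def)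


definition c where "c = s_step \<gamma> \<mu> g"

lemma Phi_le_P: "1 - \<gamma> - \<mu> * max (\<xi> - x) 0 + Hr x \<le> 1 - \<gamma> + Pr \<xi>"
proof -
  have "Hr x \<le> Pr \<xi> + \<mu> * max (\<xi> - x) 0"
  proof (rule H_le)
    fix y assume y: "y \<in> {L..0}"
    have "G y - m * max (\<xi> - y) 0 \<le> Pr \<xi>" by (rule P_ge[OF y])
    moreover have "max (\<xi> - y) 0 \<le> max (\<xi> - x) 0 + \<bar>x - y\<bar>" by auto
    then have "m * max (\<xi> - y) 0 \<le> m * max (\<xi> - x) 0 + m * \<bar>x - y\<bar>"
      using m_props by (simp add: distrib_left[symmetric] mult_left_mono)
    moreover have "m * max (\<xi> - x) 0 \<le> \<mu> * max (\<xi> - x) 0" using m_props by (simp add: mult_right_mono)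
    moreover have "m * \<bar>x - y\<bar> \<le> \<bar>x - y\<bar>" using m_props by (simp add: mult_left_le_one_le)
    ultimately show "G y - \<bar>x - y\<bar> \<le> Pr \<xi> + \<mu> * max (\<xi> - x) 0" by linarith
  qed
  then show ?thesis by linarith
qed

lemma s_le_c: "Sup {ereal \<xi> | \<xi>. (SUP x. Phi \<gamma> \<mu> (ereal \<xi>) g x) \<ge> ereal \<gamma>} \<le> c"
proof (rule Sup_least)
  fix z assume "z \<in> {ereal \<xi> | \<xi>. (SUP x. Phi \<gamma> \<mu> (ereal \<xi>) g x) \<ge> ereal \<gamma>}"
  then obtain \<xi> where z: "z = ereal \<xi>" and sup: "(SUP x. Phi \<gamma> \<mu> (ereal \<xi>) g x) \<ge> ereal \<gamma>" by auto
  have "(SUP x. Phi \<gamma> \<mu> (ereal \<xi>) g x) \<le> ereal (1 - \<gamma> + Pr \<xi>)"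
    by (rule SUP_least) (simp add: Phi_eq Phi_le_P)
  with sup have "ereal \<gamma> \<le> ereal (1 - \<gamma> + Pr \<xi>)" by (rule order_trans)
  then have "\<gamma> \<le> 1 - \<gamma> + Pr \<xi>" by simp
  then have "p_step \<gamma> \<mu> g \<xi> \<ge> ereal \<gamma>" using p_ge by simp
  then have "z \<in> {ereal x |x. ereal \<gamma> \<le> p_step \<gamma> \<mu> g x}" unfolding z by blast
  then show "z \<le> c" unfolding c_def s_step_def by (rule Sup_upper)
qed

lemma c_bound: "c \<le> ereal (max 0 ((1 - 2 * \<gamma> + B0) / m))"
  unfolding c_def s_step_def
proof (rule Sup_least)
  fix z assume "z \<in> {ereal x |x. ereal \<gamma> \<le> p_step \<gamma> \<mu> g x}"
  then obtain x where z: "z = ereal x" and p: "ereal \<gamma> \<le> p_step \<gamma> \<mu> g x" by auto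
  have P: "1 - \<gamma> + Pr x \<ge> \<gamma>" using p p_ge by simp
  show "z \<le> ereal (max 0 ((1 - 2 * \<gamma> + B0) / m))"
  proof (cases "x \<le> 0")
    case True
    then have "x \<le> max 0 ((1 - 2 * \<gamma> + B0) / m)" by simp
    then show ?thesis using z by (metis ereal_less_eq(3))
  next
    case False
    have "Pr x \<le> B0 - m * x"
    proof (rule P_le)
      fix y assume y: "y \<in> {L..0}"
      have "m * x \<le> m * max (x - y) 0" using y m_props by (intro mult_left_mono) auto
      then show "G y - m * max (x - y) 0 \<le> B0 - m * x" using bounded[OF y] by linarith
    qed
    then have "m * x \<le> 1 - 2 * \<gamma> + B0" using P by linarith
    then have "x \<le> (1 - 2 * \<gamma> + B0) / m" using m_props by (simp add: field_simps)
    then have "x \<le> max 0 ((1 - 2 * \<gamma> + B0) / m)" by simp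
    then show ?thesis using z by (metis ereal_less_eq(3))
  qed
qed

definition cr where "cr = real_of_ereal c"

lemma c_real: "c = ereal cr" and v_le_cr: "v \<le> cr"
proof -
  have "ereal v \<le> c" using vle s_le_c by (rule order_trans)
  moreover obtain B1 where "c \<le> ereal B1" using c_bound by blast
  then have "c \<noteq> \<infinity>" by (cases c) auto
  ultimately show "c = ereal cr" unfolding cr_def by (cases c) auto
  with \<open>ereal v \<le> c\<close> show "v \<le> cr" by simp
qed

lemma Pc: "Pr cr = 2 * \<gamma> - 1"
proof (rule antisym)
  show "2 * \<gamma> - 1 \<le> Pr cr"
  proof (rule ccontr)
    assume "\<not> ?thesis"
    then have lt: "Pr cr < 2 * \<gamma> - 1" by simp
    define \<delta> where "\<delta> = (2 * \<gamma> - 1 - Pr cr) / (2 * m)"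
    have dpos: "\<delta> > 0" using lt m_props unfolding \<delta>_def by simp
    have md: "2 * (m * \<delta>) = 2 * \<gamma> - 1 - Pr cr" using m_props unfolding \<delta>_def by simp
    have "ereal (cr - \<delta>) < c" using c_real dpos by simp
    then obtain z where z: "z \<in> {ereal x |x. ereal \<gamma> \<le> p_step \<gamma> \<mu> g x}" and zz: "ereal (cr - \<delta>) < z"
      unfolding c_def s_step_def by (auto simp: less_Sup_iff)
    then obtain x where x: "z = ereal x" "ereal \<gamma> \<le> p_step \<gamma> \<mu> g x" by auto
    have "z \<le> c" unfolding c_def s_step_def using z by (rule Sup_upper)
    then have xc: "x \<le> cr" using x c_real by simp
    have xd: "cr - \<delta> < x" using zz x by simp
    have P: "1 - \<gamma> + Pr x \<ge> \<gamma>" using x p_ge by simp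
    have "Pr x \<le> Pr cr + m * \<bar>x - cr\<bar>" by (rule P_lip)
    moreover have "m * \<bar>x - cr\<bar> \<le> m * \<delta>" using xc xd m_props by (intro mult_left_mono) auto
    ultimately show False using P md lt by linarith
  qed
next
  show "Pr cr \<le> 2 * \<gamma> - 1"
  proof (rule ccontr)
    assume "\<not> ?thesis"
    then have lt: "Pr cr > 2 * \<gamma> - 1" by simp
    define \<delta> where "\<delta> = (Pr cr - (2 * \<gamma> - 1)) / (2 * m)"
    have dpos: "\<delta> > 0" using lt m_props unfolding \<delta>_def by simp
    have md: "2 * (m * \<delta>) = Pr cr - (2 * \<gamma> - 1)" using m_props unfolding \<delta>_def by simp
    have "Pr cr \<le> Pr (cr + \<delta>) + m * \<bar>cr - (cr + \<delta>)\<bar>" by (rule P_lip)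
    then have "1 - \<gamma> + Pr (cr + \<delta>) \<ge> \<gamma>" using md dpos lt m_props by simp
    then have "p_step \<gamma> \<mu> g (cr + \<delta>) \<ge> ereal \<gamma>" using p_ge by simp
    then have "ereal (cr + \<delta>) \<le> c" unfolding c_def s_step_def by (auto intro: Sup_upper)
    then show False using c_real dpos by simp
  qed
qed

definition F where "F x = 1 - \<gamma> - \<mu> * max (cr - x) 0 + Hr x"

lemma wave: "pi_cut (ereal (F x)) = g (x - v)"
  using wave1[of x] unfolding g_step_def c_def[symmetric] c_real Phi_eq F_def .

lemma F_lip: "F x \<le> F x' + (1 + \<mu>) * \<bar>x - x'\<bar>"
proof -
  have "Hr x \<le> Hr x' + \<bar>x - x'\<bar>" by (rule H_lip)
  moreover have "max (cr - x') 0 \<le> max (cr - x) 0 + \<bar>x - x'\<bar>" by auto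
  then have "\<mu> * max (cr - x') 0 \<le> \<mu> * max (cr - x) 0 + \<mu> * \<bar>x - x'\<bar>"
    using mu by (simp add: distrib_left[symmetric] mult_left_mono)
  ultimately show ?thesis unfolding F_def by (simp add: algebra_simps)
qed

lemma F_supp: "x - v \<in> {L..0} \<longleftrightarrow> F x \<ge> 0"
proof
  assume a: "x - v \<in> {L..0}"
  then have "g (x - v) \<ge> 0" using inn by simp
  show "F x \<ge> 0"
  proof (rule ccontr)
    assume "\<not> F x \<ge> 0"
    then have "g (x - v) = -\<infinity>" using wave[of x] by (simp add: pi_cut_ereal)
    with \<open>g (x - v) \<ge> 0\<close> show False by simp
  qed
next
  assume "F x \<ge> 0"
  then have "g (x - v) = ereal (F x)" using wave[of x] by (simp add: pi_cut_ereal)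
  with \<open>F x \<ge> 0\<close> have "g (x - v) \<ge> 0" by simp
  then show "x - v \<in> {L..0}" using supp by blast
qed

lemma G_F: "y \<in> {L..0} \<Longrightarrow> G y = F (y + v)"
  using wave[of "y + v"] inn[of y] F_supp[of "y + v"] by (simp add: pi_cut_ereal)

lemma F_neg: "x - v \<notin> {L..0} \<Longrightarrow> F x < 0"
  using F_supp by force

lemma G0: "G 0 = 0"
proof -
  have ge: "F v \<ge> 0" using F_supp[of v] L by simp
  have "\<not> F v > 0"
  proof
    assume pos: "F v > 0"
    define \<delta> where "\<delta> = F v / (2 * (1 + \<mu>))"
    have dpos: "\<delta> > 0" using pos mu unfolding \<delta>_def by simp
    have d2: "(1 + \<mu>) * \<delta> = F v / 2" using mu unfolding \<delta>_def by (simp add: field_simps add_pos_pos)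
    have "F (v + \<delta>) < 0" using F_neg[of "v + \<delta>"] dpos by simp
    moreover have "F v \<le> F (v + \<delta>) + (1 + \<mu>) * \<bar>v - (v + \<delta>)\<bar>" by (rule F_lip)
    ultimately show False using d2 dpos pos by simp
  qed
  then show ?thesis using ge G_F[OF L_in(2)] by simp
qed

lemma GL: "G L = 0"
proof -
  have ge: "F (L + v) \<ge> 0" using F_supp[of "L + v"] L by simp
  have "\<not> F (L + v) > 0"
  proof
    assume pos: "F (L + v) > 0"
    define \<delta> where "\<delta> = F (L + v) / (2 * (1 + \<mu>))"
    have dpos: "\<delta> > 0" using pos mu unfolding \<delta>_def by simp
    have d2: "(1 + \<mu>) * \<delta> = F (L + v) / 2" using mu unfolding \<delta>_def by (simp add: field_simps add_pos_pos)
    have "F (L + v - \<delta>) < 0" using F_neg[of "L + v - \<delta>"] dpos by simp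
    moreover have "F (L + v) \<le> F (L + v - \<delta>) + (1 + \<mu>) * \<bar>(L + v) - (L + v - \<delta>)\<bar>" by (rule F_lip)
    ultimately show False using d2 dpos pos by simp
  qed
  then show ?thesis using ge G_F[OF L_in(1)] by simp
qed

end

context W begin

definition M where "M = Sup (G ` {L..0})"

lemma G_le_M: "y \<in> {L..0} \<Longrightarrow> G y \<le> M"
  unfolding M_def by (rule cSup_upper) (auto intro!: bdd_aboveI2[where M=B0] bounded)

lemma M_close: assumes "\<epsilon> > 0" obtains y where "y \<in> {L..0}" "G y > M - \<epsilon>"
proof -
  have "M - \<epsilon> < Sup (G ` {L..0})" using assms unfolding M_def by simp
  then obtain r where "r \<in> G ` {L..0}" "M - \<epsilon> < r"
    using L_in by (subst (asm) less_cSup_iff) (auto intro!: bdd_aboveI2[where M=B0] bounded)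
  then show ?thesis using that by auto
qed

lemma M_ge0: "M \<ge> 0" using G_le_M[OF L_in(2)] G0 by simp

lemma H_le_M: "Hr x \<le> M"
  by (rule H_le) (smt (verit) G_le_M)

lemma F_le_M: "F x \<le> M"
proof (cases "F x \<ge> 0")
  case True
  then have "x - v \<in> {L..0}" using F_supp by simp
  then show ?thesis using G_F[of "x - v"] G_le_M[of "x - v"] by simp
next
  case False then show ?thesis using M_ge0 by simp
qed

lemma F_v: "F v = 0" using G0 G_F[OF L_in(2)] by simp

lemma v_nonneg: "v \<ge> 0"
proof (rule ccontr)
  assume "\<not> v \<ge> 0"
  then have vn: "v < 0" by simp
  define \<epsilon> where "\<epsilon> = min (1 - \<gamma>) (- \<mu> * v / 2)"
  have mv: "\<mu> * v < 0" using vn mu by (simp add: mult_pos_neg)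
  have e1: "\<epsilon> \<le> - \<mu> * v / 2" "\<epsilon> \<le> 1 - \<gamma>" unfolding \<epsilon>_def by auto
  have "\<epsilon> > 0" using mv gamma unfolding \<epsilon>_def by auto
  then have ep: "\<epsilon> > 0" "\<epsilon> \<le> 1 - \<gamma>" "2 * \<epsilon> \<le> - \<mu> * v" using e1 by auto
  obtain y where y: "y \<in> {L..0}" "G y > M - \<epsilon>" using M_close[OF ep(1)] .
  have Hy: "Hr y \<ge> G y" using H_ge[OF y(1), of y] by simp
  show False
  proof (cases "y \<le> cr")
    case False
    then have "F y = 1 - \<gamma> + Hr y" unfolding F_def by simp
    then show False using F_le_M[of y] Hy y ep by linarith
  next
    case True
    then have "F y = 1 - \<gamma> - \<mu> * (cr - y) + Hr y" unfolding F_def by simp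
    then have A1: "\<mu> * (cr - y) \<ge> 1 - \<gamma> + G y - M" using F_le_M[of y] Hy by linarith
    have "G y = F (y + v)" using G_F[OF y(1)] .
    moreover have "\<mu> * (cr - (y + v)) \<le> \<mu> * max (cr - (y + v)) 0" using mu by (intro mult_left_mono) auto
    ultimately have "G y \<le> 1 - \<gamma> - \<mu> * (cr - (y + v)) + M" unfolding F_def using H_le_M[of "y+v"] by linarith
    then have "G y \<le> 1 - \<gamma> - \<mu> * (cr - y) + \<mu> * v + M" by (simp add: algebra_simps)
    then show False using A1 y ep by linarith
  qed
qed

lemma L0_false: assumes L0: "L = 0" shows False
proof -
  have Hx: "Hr x = - \<bar>x\<bar>" for x
  proof (rule antisym)
    show "Hr x \<le> - \<bar>x\<bar>" by (rule H_le) (use L0 G0 in auto)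
    show "- \<bar>x\<bar> \<le> Hr x" using H_ge[OF L_in(2), of x] G0 by simp
  qed
  have Px: "Pr x = - m * max x 0" for x
  proof (rule antisym)
    show "Pr x \<le> - m * max x 0" by (rule P_le) (use L0 G0 in auto)
    show "- m * max x 0 \<le> Pr x" using P_ge[OF L_in(2), of x] G0 by simp
  qed
  have vc: "0 \<le> v" "v \<le> cr" using v_nonneg v_le_cr by auto
  have mc: "m * cr = 1 - 2 * \<gamma>" using Pc Px[of cr] vc by simp
  have Fx: "F x = 1 - \<gamma> - \<mu> * max (cr - x) 0 - \<bar>x\<bar>" for x unfolding F_def Hx by simp
  have Fneg: "x \<noteq> v \<Longrightarrow> F x < 0" for x using F_neg[of x] L0 by auto
  have Fv: "1 - \<gamma> - \<mu> * (cr - v) - v = 0" using F_v Fx[of v] vc by simp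
  show False
  proof (cases "v < cr")
    case True
    define x where "x = (v + cr) / 2"
    have x: "v < x" "x < cr" using True unfolding x_def by auto
    have "F x = 1 - \<gamma> - \<mu> * (cr - x) - x" using Fx[of x] x vc by simp
    then have "F x = (\<mu> - 1) * (x - v)" using Fv by (simp add: algebra_simps)
    then have "(\<mu> - 1) * (x - v) < 0" using Fneg[of x] x by simp
    then have mu1: "\<mu> < 1" using x by (simp add: mult_less_0_iff)
    then have mm: "m = \<mu>" unfolding m_def by simp
    show False
    proof (cases "v = 0")
      case True
      then have "1 - \<gamma> - \<mu> * cr = 0" using Fv by simp
      then show False using mc mm gamma by simp
    next
      case False
      then have vp: "v > 0" using vc by simp
      have "F (v/2) = 1 - \<gamma> - \<mu> * (cr - v/2) - v/2" using Fx[of "v/2"] vp vc by simp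
      moreover have "(1 - \<gamma> - \<mu> * (cr - v/2) - v/2) - (1 - \<gamma> - \<mu> * (cr - v) - v) = (1 - \<mu>) * (v/2)"
        by (simp add: field_simps)
      ultimately have "F (v/2) = (1 - \<mu>) * (v/2)" using Fv by linarith
      moreover have "(1 - \<mu>) * (v/2) > 0" using mu1 vp by simp
      ultimately show False using Fneg[of "v/2"] vp by simp
    qed
  next
    case False
    then have vcr: "v = cr" using vc by simp
    then have va: "v = 1 - \<gamma>" using Fv by simp
    then have vp: "v > 0" using gamma by simp
    have "F (v/2) = 1 - \<gamma> - \<mu> * (v/2) - v/2" using Fx[of "v/2"] vp vcr by simp
    moreover have "(1 - \<mu>) * (v/2) = v/2 - \<mu> * (v/2)" by (simp add: left_diff_distrib)
    ultimately have F2: "F (v/2) = (1 - \<mu>) * (v/2)" using va by linarith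
    show False
    proof (cases "\<mu> < 1")
      case True
      then have "(1 - \<mu>) * (v/2) > 0" using vp by simp
      then show False using F2 Fneg[of "v/2"] vp by simp
    next
      case False
      then have "m = 1" unfolding m_def by simp
      then show False using mc vcr va gamma by simp
    qed
  qed
qed

end

context W begin

lemma v_pos: "v > 0"
proof (rule ccontr)
  assume "\<not> v > 0"
  then have v0: "v = 0" using v_nonneg by simp
  have crn: "cr \<ge> 0" using v_le_cr v0 by simp
  define K where "K = 1 - \<gamma> - \<mu> * cr"
  have Gy: "G y = K + \<mu> * y + Hr y" if y: "y \<in> {L..0}" for y
  proof -
    have "G y = F y" using G_F[OF y] v0 by simp
    moreover have "max (cr - y) 0 = cr - y" using y crn by simp
    ultimately show ?thesis unfolding F_def K_def by (simp add: algebra_simps)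
  qed
  have H0: "Hr 0 = - K" using Gy[OF L_in(2)] G0 by simp
  have "Hr 0 \<ge> 0" using H_ge[OF L_in(2), of 0] G0 by simp
  then have Kn: "K \<le> 0" using H0 by simp
  have M0: "M \<le> 0"
  proof (rule ccontr)
    assume "\<not> M \<le> 0"
    then have Mp: "M > 0" by simp
    define qq where "qq = 2 + 1 / \<mu>"
    define \<epsilon> where "\<epsilon> = M / (2 * qq)"
    have q: "qq > 0" using mu unfolding qq_def by (simp add: add_pos_pos)
    then have q': "qq \<noteq> 0" by simp
    have ep: "\<epsilon> > 0" using Mp q unfolding \<epsilon>_def by simp
    have ep2: "\<epsilon> * (2 + 1 / \<mu>) = M / 2" using q' unfolding \<epsilon>_def qq_def[symmetric] by simp
    obtain y where y: "y \<in> {L..0}" "G y > M - \<epsilon>" using M_close[OF ep] .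
    have "G y \<le> K + \<mu> * y + M" using Gy[OF y(1)] H_le_M[of y] by simp
    moreover have "\<mu> * y \<le> 0" using y mu mult_nonneg_nonpos[of \<mu> y] by simp
    ultimately have A1: "\<mu> * y > - \<epsilon> - K" "K > - \<epsilon>" using y by linarith+
    then have "\<mu> * y > - \<epsilon>" using Kn by linarith
    then have "- \<epsilon> / \<mu> < (\<mu> * y) / \<mu>" by (rule divide_strict_right_mono[OF _ mu(1)])
    then have "- \<epsilon> / \<mu> < y" using mu by simp
    moreover have "Hr 0 \<ge> G y - \<bar>0 - y\<bar>" by (rule H_ge[OF y(1)])
    moreover have "\<bar>0 - y\<bar> = - y" using y by simp
    ultimately have "Hr 0 > M - \<epsilon> - \<epsilon> / \<mu>" using y by linarith
    moreover have "\<epsilon> * (2 + 1 / \<mu>) = 2 * \<epsilon> + \<epsilon> / \<mu>" by (simp add: algebra_simps)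
    ultimately show False using H0 A1 ep2 Mp by linarith
  qed
  have Gz: "G y = 0" if y: "y \<in> {L..0}" for y using G_le_M[OF y] M0 inn(2)[OF y] by simp
  have "\<mu> * L \<ge> 0"
  proof -
    have "0 = K + \<mu> * L + Hr L" using Gy[OF L_in(1)] Gz[OF L_in(1)] by simp
    moreover have "Hr L \<le> 0" using H_le_M[of L] M0 by simp
    ultimately show ?thesis using Kn by linarith
  qed
  have "L = 0"
  proof (rule ccontr)
    assume "L \<noteq> 0"
    then have "L < 0" using L by simp
    then have "\<mu> * L < 0" using mu by (simp add: mult_pos_neg)
    then show False using \<open>\<mu> * L \<ge> 0\<close> by simp
  qed
  then show False by (rule L0_false)
qed

definition A where "A = Sup ((\<lambda>y. G y + y) ` {L..0})"

lemma H_pos: assumes "x \<ge> 0" shows "Hr x = A - x"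
proof (rule antisym)
  have bd: "bdd_above ((\<lambda>y. G y + y) ` {L..0})"
    by (rule bdd_aboveI2[where M=B0]) (use bounded in force)
  show "Hr x \<le> A - x"
  proof (rule H_le)
    fix y assume y: "y \<in> {L..0}"
    have "G y + y \<le> A" unfolding A_def using y bd by (intro cSup_upper) auto
    then show "G y - \<bar>x - y\<bar> \<le> A - x" using y assms by simp
  qed
  have "A \<le> Hr x + x" unfolding A_def
  proof (rule cSup_least)
    show "(\<lambda>y. G y + y) ` {L..0} \<noteq> {}" using L_in by auto
    fix r assume "r \<in> (\<lambda>y. G y + y) ` {L..0}"
    then obtain y where y: "y \<in> {L..0}" "r = G y + y" by auto
    then show "r \<le> Hr x + x" using H_ge[OF y(1), of x] assms by simp
  qed
  then show "A - x \<le> Hr x" by simp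
qed

lemma KA: "1 - \<gamma> - \<mu> * (cr - v) + A - v = 0"
  using F_v H_pos[of v] v_pos v_le_cr unfolding F_def by simp

lemma piece1: assumes "-v \<le> y" "y \<le> 0" shows "F (y + v) = (\<mu> - 1) * y"
proof -
  have "F (y + v) = 1 - \<gamma> - \<mu> * (cr - y - v) + A - (y + v)"
    using H_pos[of "y + v"] assms v_le_cr unfolding F_def by simp
  also have "\<dots> = (1 - \<gamma> - \<mu> * (cr - v) + A - v) + (\<mu> - 1) * y" by (simp add: algebra_simps)
  finally show ?thesis using KA by simp
qed

lemma mu_lt1: "\<mu> < 1"
proof (rule ccontr)
  assume "\<not> \<mu> < 1"
  then have m1: "\<mu> > 1" using mu by simp
  show False
  proof (cases "L = 0")
    case True then show False by (rule L0_false)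
  next
    case False
    define y where "y = max L (- v)"
    have y: "y \<in> {L..0}" "-v \<le> y" "y < 0" using False L v_pos unfolding y_def by auto
    have "G y = (\<mu> - 1) * y" using G_F[OF y(1)] piece1[of y] y by simp
    moreover have "(\<mu> - 1) * y < 0" using m1 y by (simp add: mult_pos_neg)
    ultimately show False using inn(2)[OF y(1)] by simp
  qed
qed

lemma L_le_v: "L \<le> - v"
proof -
  have "F 0 = (\<mu> - 1) * (- v)" using piece1[of "-v"] v_pos by simp
  also have "\<dots> > 0" using mult_neg_pos[of "\<mu> - 1" v] mu_lt1 v_pos by simp
  finally have "0 - v \<in> {L..0}" using F_supp[of 0] by simp
  then show ?thesis by simp
qed

lemma G_piece1: "-v \<le> y \<Longrightarrow> y \<le> 0 \<Longrightarrow> G y = (\<mu> - 1) * y"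
  using G_F[of y] piece1[of y] L_le_v by simp

lemma phi0: assumes z: "z \<in> {L..0}" shows "G z + (1 - \<mu>) * z \<le> 0"
proof (cases "z \<ge> -v")
  case True then show ?thesis using G_piece1[of z] z by (simp add: algebra_simps)
next
  case False
  then have zv: "z < -v" by simp
  define t where "t = v / (- z)"
  have zn: "-z > 0" using zv v_pos by simp
  have t01: "0 \<le> t" "t \<le> 1" using zv v_pos zn unfolding t_def by (auto simp: field_simps)
  have tz: "t * z + (1 - t) * 0 = - v" using zn unfolding t_def by (simp add: field_simps)
  have "t * G z + (1 - t) * G 0 \<le> G (t * z + (1 - t) * 0)"
    by (rule concave[OF z L_in(2)]) (use t01 in auto)
  then have "t * G z \<le> G (-v)" unfolding tz using G0 by simp
  also have "\<dots> = (1 - \<mu>) * v" using G_piece1[of "-v"] v_pos by (simp add: algebra_simps)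
  finally have h1: "(- z) * (t * G z) \<le> (- z) * ((1 - \<mu>) * v)" using zn by (simp add: mult_left_mono)
  have h2: "(- z) * (t * G z) = v * G z" using zn unfolding t_def by (simp add: field_simps)
  have h3: "(- z) * ((1 - \<mu>) * v) = v * ((1 - \<mu>) * (- z))" by (simp add: algebra_simps)
  have "v * G z \<le> v * ((1 - \<mu>) * (- z))" unfolding h2[symmetric] h3[symmetric] by (rule h1)
  then have "G z \<le> (1 - \<mu>) * (- z)" by (rule mult_le_cancel_left_pos[OF v_pos, THEN iffD1])
  then show ?thesis by (simp add: algebra_simps)
qed

lemma phi: assumes z: "z \<in> {L..0}" and x: "x \<in> {L..0}" and zx: "z \<le> x"
  shows "G z + (1 - \<mu>) * z \<le> G x + (1 - \<mu>) * x"
proof (cases "x \<ge> -v")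
  case True
  then have "G x + (1 - \<mu>) * x = 0" using G_piece1[of x] x by (simp add: algebra_simps)
  then show ?thesis using phi0[OF z] by simp
next
  case False
  then have xv: "x < -v" by simp
  then have zn: "z < 0" using zx v_pos by simp
  define t where "t = x / z"
  have t01: "0 \<le> t" "t \<le> 1" using zn zx xv v_pos unfolding t_def by (auto simp: field_simps)
  have tz: "t * z + (1 - t) * 0 = x" using zn unfolding t_def by simp
  have "t * G z + (1 - t) * G 0 \<le> G (t * z + (1 - t) * 0)"
    by (rule concave[OF z L_in(2)]) (use t01 in auto)
  then have "t * G z \<le> G x" unfolding tz using G0 by simp
  moreover have "(1 - \<mu>) * x = t * ((1 - \<mu>) * z)" using tz by simp
  ultimately have "G x + (1 - \<mu>) * x \<ge> t * (G z + (1 - \<mu>) * z)" by (simp add: algebra_simps)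
  moreover have "t * (G z + (1 - \<mu>) * z) \<ge> G z + (1 - \<mu>) * z"
  proof -
    have "(1 - t) * (G z + (1 - \<mu>) * z) \<le> 0" using t01 phi0[OF z] by (simp add: mult_nonneg_nonpos)
    then show ?thesis by (simp add: algebra_simps)
  qed
  ultimately show ?thesis by linarith
qed

lemma A0: "A = 0"
proof (rule antisym)
  show "A \<le> 0" unfolding A_def
  proof (rule cSup_least)
    show "(\<lambda>y. G y + y) ` {L..0} \<noteq> {}" using L_in by auto
    fix r assume "r \<in> (\<lambda>y. G y + y) ` {L..0}"
    then obtain y where y: "y \<in> {L..0}" "r = G y + y" by auto
    have "G y + (1 - \<mu>) * y \<le> 0" by (rule phi0[OF y(1)])
    moreover have "\<mu> * y \<le> 0" using y mu by (simp add: mult_nonneg_nonpos)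
    ultimately show "r \<le> 0" using y by (simp add: algebra_simps)
  qed
  have bd: "bdd_above ((\<lambda>y. G y + y) ` {L..0})"
    by (rule bdd_aboveI2[where M=B0]) (use bounded in force)
  have "G 0 + 0 \<in> (\<lambda>y. G y + y) ` {L..0}" using L_in by blast
  then show "0 \<le> A" unfolding A_def using cSup_upper[OF _ bd, of "G 0 + 0"] G0 by simp
qed

lemma Kv: "1 - \<gamma> - \<mu> * (cr - v) = v" using KA A0 by simp

lemma cr_eq: "cr = (1 - \<gamma> - (1 - \<mu>) * v) / \<mu>"
  using Kv mu by (simp add: field_simps)

lemma G_rec: assumes y: "y \<in> {L..0}" shows "G y = v + \<mu> * y + Hr (y + v)"
proof -
  have "max (cr - (y + v)) 0 = cr - y - v" using y v_le_cr by simp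
  then have "G y = 1 - \<gamma> - \<mu> * (cr - y - v) + Hr (y + v)" using G_F[OF y] unfolding F_def by simp
  also have "\<dots> = (1 - \<gamma> - \<mu> * (cr - v)) + \<mu> * y + Hr (y + v)" by (simp add: algebra_simps)
  finally show ?thesis using Kv by simp
qed

end

context W begin

definition jj :: "real \<Rightarrow> int" where "jj z = \<lfloor>- z / v\<rfloor> + 1"
definition ell :: "int \<Rightarrow> real \<Rightarrow> real" where
  "ell i z = - z + \<mu> * of_int i * ((of_int i - 1) * v / 2 + z)"
definition Gt where "Gt z = ell (jj z) z"

lemma jj_bounds: "of_int (jj z - 1) * v \<le> - z" "- z < of_int (jj z) * v"
proof -
  define r where "r = - z / v"
  have rv: "r * v = - z" using v_pos unfolding r_def by simp
  have f: "of_int \<lfloor>r\<rfloor> \<le> r" "r < of_int (\<lfloor>r\<rfloor> + 1)"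
    using floor_correct[of r] by auto
  from f(1) have "of_int \<lfloor>r\<rfloor> * v \<le> r * v" using v_pos by (intro mult_right_mono) auto
  then show "of_int (jj z - 1) * v \<le> - z" unfolding jj_def r_def[symmetric] rv by simp
  from f(2) have "r * v < of_int (\<lfloor>r\<rfloor> + 1) * v" using v_pos by (intro mult_strict_right_mono) auto
  then show "- z < of_int (jj z) * v" unfolding jj_def r_def[symmetric] rv .
qed

lemma jj_eq: assumes "of_int (j - 1) * v \<le> - z" "- z < of_int j * v" shows "jj z = j"
proof -
  define r where "r = - z / v"
  have rv: "- z = r * v" using v_pos unfolding r_def by simp
  have "of_int (j - 1) \<le> r" using assms(1) v_pos unfolding rv by (simp only: mult_le_cancel_right_pos)
  moreover have "r < of_int j" using assms(2) v_pos unfolding rv by (simp only: mult_less_cancel_right_pos)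
  ultimately have "\<lfloor>r\<rfloor> = j - 1" by (simp add: floor_eq_iff)
  then show ?thesis unfolding jj_def r_def[symmetric] by simp
qed

lemma ell_diff: "ell i z - ell n z = \<mu> * (of_int i - of_int n) * (v * (of_int i + of_int n - 1) / 2 + z)"
  unfolding ell_def by (simp add: field_simps)

lemma ell_aff: "ell i z = ell i x + (\<mu> * of_int i - 1) * (z - x)"
  unfolding ell_def by (simp add: field_simps)

lemma Gt_min: "Gt z \<le> ell i z"
proof -
  define n where "n = jj z"
  have b1: "of_int n * v - v \<le> - z" "- z < of_int n * v" using jj_bounds[of z] unfolding n_def
    by (auto simp: algebra_simps)
  have h0: "0 \<le> (of_int i - of_int n) * (v * (of_int i + of_int n - 1) / 2 + z)"
  proof (cases "i \<ge> n + 1")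
    case True
    then have i1: "of_int i \<ge> of_int n + (1::real)" by linarith
    then have "v * (of_int i + of_int n - 1) \<ge> v * (2 * of_int n)" using v_pos by (intro mult_left_mono) auto
    moreover have "v * (2 * of_int n) = 2 * (of_int n * v)" by simp
    ultimately have "v * (of_int i + of_int n - 1) / 2 + z > 0" using b1 by linarith
    moreover have "of_int i - of_int n > (0::real)" using i1 by simp
    ultimately show ?thesis by simp
  next
    case False
    then have i1: "of_int i \<le> of_int n - (1::real) \<or> i = n" by linarith
    then show ?thesis
    proof
      assume i1: "of_int i \<le> of_int n - (1::real)"
      then have "v * (of_int i + of_int n - 1) \<le> v * (2 * of_int n - 2)" using v_pos by (intro mult_left_mono) auto
      moreover have "v * (2 * of_int n - 2) = 2 * (v * of_int n) - 2 * v" by (simp add: algebra_simps)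
      moreover have "v * of_int n - v \<le> - z" using b1 by (simp add: mult.commute)
      ultimately have "v * (of_int i + of_int n - 1) / 2 + z \<le> 0" by linarith
      moreover have "of_int i - of_int n < (0::real)" using i1 by simp
      ultimately show ?thesis by (simp add: mult_nonpos_nonpos)
    qed simp
  qed
  have "0 \<le> \<mu> * ((of_int i - of_int n) * (v * (of_int i + of_int n - 1) / 2 + z))"
    by (rule mult_nonneg_nonneg) (use h0 mu in auto)
  then have "0 \<le> ell i z - ell n z" unfolding ell_diff by (simp only: mult.assoc)
  then show ?thesis unfolding Gt_def n_def by simp
qed

lemma jj_shift: "jj z = jj (z + v) + 1"
proof -
  have "- z / v = - (z + v) / v + 1" using v_pos by (simp add: field_simps)
  then show ?thesis unfolding jj_def by simp
qed

lemma Gt_rec: "Gt z = v + \<mu> * z + Gt (z + v)"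
  unfolding Gt_def jj_shift[of z] ell_def by (simp add: field_simps)

lemma Gt_p1: assumes "- v < z" "z \<le> 0" shows "Gt z = (\<mu> - 1) * z"
proof -
  have "jj z = 1" by (rule jj_eq) (use assms in auto)
  then show ?thesis unfolding Gt_def ell_def by (simp add: algebra_simps)
qed

lemma G_Gt_aux: "\<forall>y\<in>{L..0}. \<lfloor>- y / v\<rfloor> \<le> int n \<longrightarrow> G y = Gt y"
proof (induction n)
  case 0
  show ?case
  proof (intro ballI impI)
    fix y assume y: "y \<in> {L..0}" and f: "\<lfloor>- y / v\<rfloor> \<le> int 0"
    then have "- y / v < 1" by (simp add: floor_le_iff)
    then have "(- y / v) * v < 1 * v" by (rule mult_strict_right_mono[OF _ v_pos])
    then have "- y < v" using v_pos by simp
    then show "G y = Gt y" using G_piece1[of y] Gt_p1[of y] y by simp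
  qed
next
  case (Suc n)
  show ?case
  proof (intro ballI impI)
    fix y assume y: "y \<in> {L..0}" and f: "\<lfloor>- y / v\<rfloor> \<le> int (Suc n)"
    show "G y = Gt y"
    proof (cases "\<lfloor>- y / v\<rfloor> \<le> int n")
      case True then show ?thesis using Suc.IH y by blast
    next
      case False
      then have fy: "\<lfloor>- y / v\<rfloor> = int n + 1" using f by simp
      define x where "x = y + v"
      have jy: "jj y = int n + 2" unfolding jj_def fy by simp
      have jx: "jj x = int n + 1" using jj_shift[of y] jy unfolding x_def by simp
      have fx: "\<lfloor>- x / v\<rfloor> = int n" using jx unfolding jj_def by simp
      have "of_int (jj y - 1) * v \<le> - y" by (rule jj_bounds)
      then have "(real n + 1) * v \<le> - y" using jy by (simp add: algebra_simps)
      moreover have "real n * v \<ge> 0" using v_pos by simp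
      ultimately have yv: "y \<le> - v" by (simp add: algebra_simps)
      have x: "x \<in> {L..0}" using y yv v_pos unfolding x_def by auto
      have "\<lfloor>- x / v\<rfloor> \<le> int n" using fx by simp
      then have Gx: "G x = Gt x" using Suc.IH x by blast
      have Gtx: "Gt x = ell (int n + 1) x" unfolding Gt_def jx ..
      have wx: "real n * v \<le> - x" using jj_bounds(1)[of x] jx by simp
      have q2: "\<mu> * (real n + 1) \<le> 2"
      proof (rule ccontr)
        assume "\<not> ?thesis"
        then have qg: "\<mu> * (real n + 1) > 2" by simp
        define q where "q = \<mu> * (real n + 1)"
        have eq: "Gt x = (- x) * (1 - q) + q * (real n * v / 2)" unfolding Gtx ell_def q_def
          by (simp add: algebra_simps)
        have "(- x) * (1 - q) \<le> (real n * v) * (1 - q)" using wx qg unfolding q_def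
          by (intro mult_right_mono_neg) auto
        then have le: "Gt x \<le> (real n * v) * ((2 - q) / 2)" using eq by (simp add: algebra_simps)
        have "n \<noteq> 0"
        proof
          assume "n = 0" then show False using qg mu_lt1 by simp
        qed
        then have "real n * v > 0" using v_pos by simp
        moreover have "(2 - q) / 2 < 0" using qg unfolding q_def by simp
        ultimately have "(real n * v) * ((2 - q) / 2) < 0" by (simp add: mult_pos_neg)
        then show False using le Gx inn(2)[OF x] by simp
      qed
      have Hx: "Hr x = G x"
      proof (rule antisym)
        show "G x \<le> Hr x" using H_ge[OF x, of x] by simp
        show "Hr x \<le> G x"
        proof (rule H_le)
          fix z assume z: "z \<in> {L..0}"
          show "G z - \<bar>x - z\<bar> \<le> G x"
          proof (cases "z \<le> x")
            case True
            have "G z + (1 - \<mu>) * z \<le> G x + (1 - \<mu>) * x" by (rule phi[OF z x True])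
            moreover have "\<mu> * (x - z) \<ge> 0" using True mu by simp
            ultimately show ?thesis using True by (simp add: algebra_simps)
          next
            case False
            have "- z / v \<le> - x / v" using False v_pos by (simp add: divide_right_mono)
            then have "\<lfloor>- z / v\<rfloor> \<le> int n" using fx floor_mono by metis
            then have Gz: "G z = Gt z" using Suc.IH z by blast
            have "Gt z \<le> ell (int n + 1) z" by (rule Gt_min)
            also have "\<dots> = Gt x + (\<mu> * (real n + 1) - 1) * (z - x)"
              using ell_aff[of "int n + 1" z x] Gtx by simp
            also have "\<dots> \<le> Gt x + 1 * (z - x)"
              using q2 False by (intro add_left_mono mult_right_mono) auto
            finally show ?thesis using Gz Gx False by simp
          qed
        qed
      qed
      have "G y = v + \<mu> * y + Hr x" using G_rec[OF y] unfolding x_def .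
      also have "\<dots> = Gt y" using Hx Gx Gt_rec[of y] unfolding x_def by simp
      finally show ?thesis .
    qed
  qed
qed

lemma G_Gt: assumes y: "y \<in> {L..0}" shows "G y = Gt y"
proof -
  have "y / v \<le> 0" using y v_pos by (simp add: divide_nonpos_pos)
  then have "- y / v \<ge> 0" by simp
  then have "\<lfloor>- y / v\<rfloor> \<le> int (nat \<lfloor>- y / v\<rfloor>)" by simp
  then show ?thesis using G_Gt_aux y by blast
qed

end

context W begin

definition kk :: int where "kk = \<lfloor>1 / \<mu>\<rfloor>"

lemma k_props: "kk \<ge> 1" "of_int kk * \<mu> \<le> 1" "(of_int kk + 1) * \<mu> > 1"
proof -
  have f: "of_int kk \<le> 1 / \<mu>" "1 / \<mu> < of_int kk + 1" unfolding kk_def using floor_correct[of "1/\<mu>"] by auto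
  have "1 / \<mu> > 1" using mu mu_lt1 by simp
  then show "kk \<ge> 1" unfolding kk_def by (simp add: le_floor_iff)
  from f(1) have "of_int kk * \<mu> \<le> (1 / \<mu>) * \<mu>" using mu by (intro mult_right_mono) auto
  then show "of_int kk * \<mu> \<le> 1" using mu by simp
  from f(2) have "(1 / \<mu>) * \<mu> < (of_int kk + 1) * \<mu>" using mu by (intro mult_strict_right_mono) auto
  then show "(of_int kk + 1) * \<mu> > 1" using mu by simp
qed

lemma ell_alt: "ell j z = (- z) * (1 - \<mu> * of_int j) + \<mu> * of_int j * (of_int j - 1) * v / 2"
  unfolding ell_def by (simp add: field_simps)

lemma Gt_pos_mid: assumes "- (of_int kk * v) < z" "z \<le> - v" shows "Gt z > 0"
proof -
  define j where "j = jj z"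
  have b: "of_int (j - 1) * v \<le> - z" "- z < of_int j * v" using jj_bounds[of z] unfolding j_def by auto
  have "1 * v < of_int j * v" using b assms by simp
  then have "1 < (of_int j :: real)" using v_pos by (simp only: mult_less_cancel_right_pos)
  then have j2: "j \<ge> 2" by simp
  have "of_int (j - 1) * v < of_int kk * v" using b assms by simp
  then have "of_int (j - 1) < (of_int kk :: real)" using v_pos by (simp only: mult_less_cancel_right_pos)
  then have jk: "j \<le> kk" by simp
  have "\<mu> * of_int j \<le> \<mu> * of_int kk" using jk mu by simp
  then have mj: "1 - \<mu> * of_int j \<ge> 0" using k_props(2) by (simp add: mult.commute)
  have "(- z) * (1 - \<mu> * of_int j) \<ge> 0" by (rule mult_nonneg_nonneg) (use mj assms v_pos in auto)
  moreover have "\<mu> * of_int j * (of_int j - 1) * v / 2 > 0" using j2 mu v_pos by simp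
  ultimately show ?thesis unfolding Gt_def j_def[symmetric] ell_alt by simp
qed

lemma L_le_kv: "L \<le> - (of_int kk * v)"
proof (rule ccontr)
  assume "\<not> ?thesis"
  then have "Gt L > 0" using Gt_pos_mid[of L] L_le_v by simp
  then show False using G_Gt[OF L_in(1)] GL by simp
qed

definition V where "V = (of_int kk - 1) * v * (1 - \<mu> * (of_int kk + 2) / 2)"
definition y0 where "y0 = - ((of_int kk - 1) * v)"

lemma y0_in: "y0 \<in> {L..0}"
proof -
  have "y0 \<ge> - (of_int kk * v)" unfolding y0_def using v_pos by (simp add: algebra_simps)
  moreover have "y0 \<le> 0" unfolding y0_def using k_props(1) v_pos by simp
  ultimately show ?thesis using L_le_kv by simp
qed

lemma jj_y0: "jj y0 = kk"
  by (rule jj_eq) (use v_pos in \<open>auto simp: y0_def algebra_simps\<close>)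

lemma Gt_y0: "Gt y0 + \<mu> * y0 = V"
  unfolding Gt_def jj_y0 unfolding ell_def V_def y0_def by (simp add: field_simps)

lemma Gt_mu_le: "Gt z + \<mu> * z \<le> V"
proof (cases "z \<le> y0")
  case True
  have "Gt z \<le> ell kk z" by (rule Gt_min)
  moreover have "ell kk z + \<mu> * z - V = ((of_int kk + 1) * \<mu> - 1) * (z - y0)"
    unfolding ell_def V_def y0_def by (simp add: field_simps)
  moreover have "((of_int kk + 1) * \<mu> - 1) * (z - y0) \<le> 0"
    using True k_props(3) by (simp add: mult_nonneg_nonpos)
  ultimately show ?thesis by linarith
next
  case False
  have "Gt z \<le> ell (kk - 1) z" by (rule Gt_min)
  moreover have "ell (kk - 1) z + \<mu> * z - V = (of_int kk * \<mu> - 1) * (z - y0)"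
    unfolding ell_def V_def y0_def by (simp add: field_simps)
  moreover have "(of_int kk * \<mu> - 1) * (z - y0) \<le> 0"
    using False k_props(2) by (simp add: mult_nonpos_nonneg)
  ultimately show ?thesis by linarith
qed

lemma m_mu: "m = \<mu>" using mu_lt1 unfolding m_def by simp

lemma Pr_val: "Pr cr = V - \<mu> * cr"
proof (rule antisym)
  show "Pr cr \<le> V - \<mu> * cr"
  proof (rule P_le)
    fix y assume y: "y \<in> {L..0}"
    have "max (cr - y) 0 = cr - y" using y v_le_cr v_pos by simp
    then have "G y - m * max (cr - y) 0 = (Gt y + \<mu> * y) - \<mu> * cr"
      using G_Gt[OF y] m_mu by (simp add: algebra_simps)
    then show "G y - m * max (cr - y) 0 \<le> V - \<mu> * cr" using Gt_mu_le[of y] by simp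
  qed
  have "max (cr - y0) 0 = cr - y0" using y0_in v_le_cr v_pos by simp
  then have "G y0 - m * max (cr - y0) 0 = V - \<mu> * cr"
    using G_Gt[OF y0_in] m_mu Gt_y0 by (simp add: algebra_simps)
  then show "V - \<mu> * cr \<le> Pr cr" using P_ge[OF y0_in, of cr] by simp
qed

lemma gamma_eq: "\<gamma> = v * of_int kk * (2 - (of_int kk + 1) * \<mu>) / 2"
proof -
  have "2 * \<gamma> - 1 = V - \<mu> * cr" using Pc Pr_val by simp
  moreover have "\<mu> * cr = 1 - \<gamma> + \<mu> * v - v" using Kv by (simp add: algebra_simps)
  ultimately have "\<gamma> = V + v - \<mu> * v" by simp
  also have "\<dots> = v * of_int kk * (2 - (of_int kk + 1) * \<mu>) / 2" unfolding V_def by (simp add: field_simps)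
  finally show ?thesis .
qed

lemma den_pos: "of_int kk * (2 - (of_int kk + 1) * \<mu>) > 0"
proof -
  have "(of_int kk + 1) * \<mu> = of_int kk * \<mu> + \<mu>" by (simp add: algebra_simps)
  then have "(of_int kk + 1) * \<mu> < 2" using k_props(2) mu_lt1 by simp
  then show ?thesis using k_props(1) by simp
qed

lemma v_eq: "v = 2 * \<gamma> / (of_int kk * (2 - (of_int kk + 1) * \<mu>))"
  using gamma_eq den_pos by (simp add: field_simps)

lemma G_kv: "G (- (of_int kk * v)) = \<gamma>"
proof -
  have kin: "- (of_int kk * v) \<in> {L..0}" using L_le_kv k_props(1) v_pos by simp
  have "jj (- (of_int kk * v)) = kk + 1" by (rule jj_eq) (use v_pos in \<open>auto simp: algebra_simps\<close>)
  then have "Gt (- (of_int kk * v)) = v * of_int kk * (2 - (of_int kk + 1) * \<mu>) / 2"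
    unfolding Gt_def ell_def by (simp add: field_simps)
  then show ?thesis using G_Gt[OF kin] gamma_eq by simp
qed

lemma s_eq: "Sup {ereal \<xi> | \<xi>. (SUP x. Phi \<gamma> \<mu> (ereal \<xi>) g x) \<ge> ereal \<gamma>} = ereal cr"
proof (rule antisym)
  show "Sup {ereal \<xi> | \<xi>. (SUP x. Phi \<gamma> \<mu> (ereal \<xi>) g x) \<ge> ereal \<gamma>} \<le> ereal cr"
    using s_le_c c_real by simp
  have kin: "- (of_int kk * v) \<in> {L..0}" using L_le_kv k_props(1) v_pos by simp
  have "Phi \<gamma> \<mu> (ereal cr) g (- (of_int kk * v) + v) = ereal (F (- (of_int kk * v) + v))"
    unfolding Phi_eq F_def ..
  also have "\<dots> = ereal \<gamma>" using G_F[OF kin] G_kv by simp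
  finally have "ereal \<gamma> \<le> (SUP x. Phi \<gamma> \<mu> (ereal cr) g x)" by (metis UNIV_I SUP_upper)
  then show "ereal cr \<le> Sup {ereal \<xi> | \<xi>. (SUP x. Phi \<gamma> \<mu> (ereal \<xi>) g x) \<ge> ereal \<gamma>}"
    by (intro Sup_upper) blast
qed

end

context W begin

definition dd where "dd x = \<mu> * of_int (jj x) - 1"

lemma ell_deriv: "(ell j has_real_derivative (\<mu> * of_int j - 1)) (at x)"
proof -
  have e: "ell j = (\<lambda>z. (\<mu> * of_int j - 1) * z + \<mu> * of_int j * ((of_int j - 1) * v / 2))"
    by (rule ext) (simp add: ell_def algebra_simps)
  show ?thesis unfolding e by (auto intro!: derivative_eq_intros)
qed

lemma Gt_deriv: assumes "- (of_int j * v) < x" "x < - ((of_int j - 1) * v)"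
  shows "(Gt has_real_derivative (\<mu> * of_int j - 1)) (at x)"
proof (rule has_field_derivative_transform_within_open[OF ell_deriv])
  show "open {- (of_int j * v)<..<- ((of_int j - 1) * v)}" by simp
  show "x \<in> {- (of_int j * v)<..<- ((of_int j - 1) * v)}" using assms by simp
  fix z assume z: "z \<in> {- (of_int j * v)<..<- ((of_int j - 1) * v)}"
  have "jj z = j" by (rule jj_eq) (use z in auto)
  then show "ell j z = Gt z" unfolding Gt_def by simp
qed

lemma F_cont: "continuous_on UNIV F"
proof (rule lipschitz_on_continuous_on)
  show "lipschitz_on (1 + \<mu>) UNIV F"
  proof (rule lipschitz_onI)
    fix x y :: real
    have "F x \<le> F y + (1 + \<mu>) * \<bar>x - y\<bar>" "F y \<le> F x + (1 + \<mu>) * \<bar>y - x\<bar>" by (rule F_lip)+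
    then show "dist (F x) (F y) \<le> (1 + \<mu>) * dist x y" unfolding dist_real_def by (simp add: abs_minus_commute)
    show "0 \<le> 1 + \<mu>" using mu by simp
  qed
qed

lemma Gt0: "Gt 0 = 0" using Gt_p1[of 0] v_pos by simp

lemma integral_G: assumes x: "x \<in> {L..0}" shows "(dd has_integral (- G x)) {x..0}"
proof -
  define N where "N = nat \<lceil>- x / v\<rceil>"
  define S where "S = (\<lambda>i. - (real i * v)) ` {..N}"
  have fS: "finite S" unfolding S_def by simp
  have der: "(Gt has_vector_derivative dd t) (at t)" if t: "t \<in> {x..0} - S" for t
  proof -
    define j where "j = jj t"
    have b: "of_int (j - 1) * v \<le> - t" "- t < of_int j * v" using jj_bounds[of t] unfolding j_def by auto
    have strict: "of_int (j - 1) * v < - t"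
    proof (rule ccontr)
      assume "\<not> ?thesis"
      then have eq: "of_int (j - 1) * v = - t" using b by simp
      have "0 \<le> - t" using t by simp
      then have "0 \<le> of_int (j - 1) * v" using eq by simp
      then have "(0::real) \<le> of_int (j - 1)" using v_pos by (simp add: zero_le_mult_iff)
      then have j1: "j - 1 \<ge> 0" by simp
      define i where "i = nat (j - 1)"
      have ii: "real i = of_int (j - 1)" unfolding i_def using j1 by simp
      have "real i * v \<le> - x" using eq ii t by simp
      moreover have rx: "(- x / v) * v = - x" using v_pos by simp
      ultimately have "real i * v \<le> (- x / v) * v" by simp
      then have "real i \<le> - x / v" using v_pos by (simp only: mult_le_cancel_right_pos)
      also have "\<dots> \<le> of_int \<lceil>- x / v\<rceil>" by (rule le_of_int_ceiling)
      finally have "i \<le> N" unfolding N_def by linarith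
      moreover have "t = - (real i * v)" using eq ii by simp
      ultimately have "t \<in> S" unfolding S_def by (intro image_eqI[of _ _ i]) auto
      then show False using t by simp
    qed
    have "(Gt has_real_derivative (\<mu> * of_int j - 1)) (at t)"
      by (rule Gt_deriv) (use b strict in \<open>auto simp: algebra_simps\<close>)
    then show ?thesis unfolding dd_def j_def[symmetric] has_real_derivative_iff_has_vector_derivative .
  qed
  have cont: "continuous_on {x..0} Gt"
  proof -
    have "continuous_on {x..0} (\<lambda>y. F (y + v))"
      by (rule continuous_on_compose2[OF F_cont]) (auto intro!: continuous_intros)
    moreover have "F (y + v) = Gt y" if y: "y \<in> {x..0}" for y
    proof -
      have yL: "y \<in> {L..0}" using x y by simp
      show ?thesis using G_F[OF yL] G_Gt[OF yL] by simp
    qed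
    ultimately show ?thesis by (rule continuous_on_eq)
  qed
  have "(dd has_integral (Gt 0 - Gt x)) {x..0}"
  proof (rule fundamental_theorem_of_calculus_strong[OF fS])
    show "x \<le> 0" using x by simp
    show "\<And>t. t \<in> {x..0} - S \<Longrightarrow> (Gt has_vector_derivative dd t) (at t)" by (rule der)
    show "continuous_on {x..0} Gt" by (rule cont)
  qed
  then show ?thesis using Gt0 G_Gt[OF x] by simp
qed

lemma Greal: "(\<lambda>z. real_of_ereal (g z)) = G" by (rule ext) (simp add: G_def)

lemma deriv_within: assumes x: "x \<in> {L..0}" and j: "- (real j * v) < x" "x < - ((real j - 1) * v)"
  shows "dd x = real j * \<mu> - 1" "((\<lambda>z. real_of_ereal (g z)) has_real_derivative dd x) (at x within {L..0})"
proof -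
  have jx: "jj x = int j" by (rule jj_eq) (use j in auto)
  then show "dd x = real j * \<mu> - 1" unfolding dd_def by simp
  have "(Gt has_real_derivative (\<mu> * of_int (int j) - 1)) (at x)" by (rule Gt_deriv) (use j in auto)
  then have "(Gt has_real_derivative dd x) (at x within {L..0})" unfolding dd_def jx
    by (rule has_field_derivative_at_within)
  then have "(G has_real_derivative dd x) (at x within {L..0})"
    by (rule has_field_derivative_transform_within[where d=1]) (use x G_Gt in auto)
  then show "((\<lambda>z. real_of_ereal (g z)) has_real_derivative dd x) (at x within {L..0})" unfolding Greal .
qed

lemma main:
  "\<mu> < 1 \<and> \<lfloor>1 / \<mu>\<rfloor> \<ge> 1
    \<and> v = 2 * \<gamma> / (real_of_int \<lfloor>1 / \<mu>\<rfloor> * (2 - (real_of_int \<lfloor>1 / \<mu>\<rfloor> + 1) * \<mu>))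
    \<and> Sup {ereal \<xi> | \<xi>. (SUP x. Phi \<gamma> \<mu> (ereal \<xi>) g x) \<ge> ereal \<gamma>} = ereal ((1 - \<gamma> - (1 - \<mu>) * v) / \<mu>)
    \<and> (\<forall>x. x \<notin> {L..0} \<longrightarrow> g x = -\<infinity>)
    \<and> (\<exists>d :: real \<Rightarrow> real.
          (\<forall>x\<in>{L..0}. d integrable_on {x..0} \<and> g x = ereal (- integral {x..0} d))
        \<and> (\<forall>j::nat. \<forall>x\<in>{L..0}. j \<ge> 1 \<and> - (real j * v) < x \<and> x < - ((real j - 1) * v) \<longrightarrow>
              d x = real j * \<mu> - 1
            \<and> ((\<lambda>z. real_of_ereal (g z)) has_real_derivative d x) (at x within {L..0})))"
proof (intro conjI)
  show "\<mu> < 1" by (rule mu_lt1)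
  show "\<lfloor>1 / \<mu>\<rfloor> \<ge> 1" using k_props(1) unfolding kk_def .
  show "v = 2 * \<gamma> / (real_of_int \<lfloor>1 / \<mu>\<rfloor> * (2 - (real_of_int \<lfloor>1 / \<mu>\<rfloor> + 1) * \<mu>))"
    using v_eq unfolding kk_def .
  show "Sup {ereal \<xi> | \<xi>. (SUP x. Phi \<gamma> \<mu> (ereal \<xi>) g x) \<ge> ereal \<gamma>} = ereal ((1 - \<gamma> - (1 - \<mu>) * v) / \<mu>)"
    using s_eq cr_eq by simp
  show "\<forall>x. x \<notin> {L..0} \<longrightarrow> g x = -\<infinity>" using out by blast
  show "\<exists>d :: real \<Rightarrow> real.
          (\<forall>x\<in>{L..0}. d integrable_on {x..0} \<and> g x = ereal (- integral {x..0} d))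
        \<and> (\<forall>j::nat. \<forall>x\<in>{L..0}. j \<ge> 1 \<and> - (real j * v) < x \<and> x < - ((real j - 1) * v) \<longrightarrow>
              d x = real j * \<mu> - 1
            \<and> ((\<lambda>z. real_of_ereal (g z)) has_real_derivative d x) (at x within {L..0}))"
  proof (intro exI[of _ dd] conjI ballI allI impI)
    fix x assume x: "x \<in> {L..0}"
    have I: "(dd has_integral (- G x)) {x..0}" by (rule integral_G[OF x])
    then show "dd integrable_on {x..0}" by blast
    show "g x = ereal (- integral {x..0} dd)" using I inn(1)[OF x] by (simp add: integral_unique)
  next
    fix j :: nat and x assume x: "x \<in> {L..0}" and j: "1 \<le> j \<and> - (real j * v) < x \<and> x < - ((real j - 1) * v)"
    show "dd x = real j * \<mu> - 1" using deriv_within(1)[OF x] j by blast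
    show "((\<lambda>z. real_of_ereal (g z)) has_real_derivative dd x) (at x within {L..0})"
      using deriv_within(2)[OF x] j by blast
  qed
qed

end

theorem propositionS3p5:
  fixes \<gamma> \<mu> v L :: real and g :: "real \<Rightarrow> ereal" and k :: int and s :: ereal
  assumes gamma: "0 < \<gamma>" "\<gamma> < 1"
    and mu: "0 < \<mu>" "\<mu> \<noteq> 1"
    and k_def: "k = \<lfloor>1 / \<mu>\<rfloor>"
    and finite_vals: "\<forall>x. g x \<noteq> \<infinity>"
    and conc: "concave_e g"
    and tw: "traveling_wave \<gamma> \<mu> g v"
    and supp: "{x. g x \<ge> 0} = {L..0}" and L: "L \<le> 0"
    and s_def: "s = Sup {ereal \<xi> | \<xi>. (SUP x. Phi \<gamma> \<mu> (ereal \<xi>) g x) \<ge> ereal \<gamma>}"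
    and v_le: "ereal v \<le> s"
  shows "\<mu> < 1 \<and> k \<ge> 1
    \<and> v = 2 * \<gamma> / (real_of_int k * (2 - (real_of_int k + 1) * \<mu>))
    \<and> s = ereal ((1 - \<gamma> - (1 - \<mu>) * v) / \<mu>)
    \<and> (\<forall>x. x \<notin> {L..0} \<longrightarrow> g x = -\<infinity>)
    \<and> (\<exists>d :: real \<Rightarrow> real.
          (\<forall>x\<in>{L..0}. d integrable_on {x..0} \<and> g x = ereal (- integral {x..0} d))
        \<and> (\<forall>j::nat. \<forall>x\<in>{L..0}. j \<ge> 1 \<and> - (real j * v) < x \<and> x < - ((real j - 1) * v) \<longrightarrow>
              d x = real j * \<mu> - 1
            \<and> ((\<lambda>z. real_of_ereal (g z)) has_real_derivative d x) (at x within {L..0})))"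
proof -
  have vle': "ereal v \<le> Sup {ereal \<xi> | \<xi>. (SUP x. Phi \<gamma> \<mu> (ereal \<xi>) g x) \<ge> ereal \<gamma>}"
    using v_le s_def by simp
  interpret W \<gamma> \<mu> v L g
    by (rule W.intro) (use gamma mu finite_vals conc tw supp L vle' in auto)
  have m: "\<mu> < 1 \<and> \<lfloor>1 / \<mu>\<rfloor> \<ge> 1
    \<and> v = 2 * \<gamma> / (real_of_int \<lfloor>1 / \<mu>\<rfloor> * (2 - (real_of_int \<lfloor>1 / \<mu>\<rfloor> + 1) * \<mu>))
    \<and> Sup {ereal \<xi> | \<xi>. (SUP x. Phi \<gamma> \<mu> (ereal \<xi>) g x) \<ge> ereal \<gamma>} = ereal ((1 - \<gamma> - (1 - \<mu>) * v) / \<mu>)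
    \<and> (\<forall>x. x \<notin> {L..0} \<longrightarrow> g x = -\<infinity>)
    \<and> (\<exists>d :: real \<Rightarrow> real.
          (\<forall>x\<in>{L..0}. d integrable_on {x..0} \<and> g x = ereal (- integral {x..0} d))
        \<and> (\<forall>j::nat. \<forall>x\<in>{L..0}. j \<ge> 1 \<and> - (real j * v) < x \<and> x < - ((real j - 1) * v) \<longrightarrow>
              d x = real j * \<mu> - 1
            \<and> ((\<lambda>z. real_of_ereal (g z)) has_real_derivative d x) (at x within {L..0})))"
    by (rule main)
  show ?thesis unfolding k_def s_def by (rule m)
qed

end
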